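(* Let $X$ be a non-negative continuous NBU random variable with distribution function $F$ and $\overline F(t)>0$ for all $t\ge0$, and let $K>0$. Let $N^{MR}(t)$ be the number of failures in $[0,t]$ of a unit with lifetime distribution $F$ under a minimal repair policy, and $N^{A,K}(t)$ the number of failures in $[0,t]$ under an age replacement policy with replacement interval $K$. Then $N^{MR}(t)\ge_{\mathrm{st}}N^{A,K}(t)$ for all $t\ge0$.
   Context: Minimal repair policy: failure times $T^{MR}_1\sim F$ and, for $i\ge2$, conditionally on $T^{MR}_1=t_1,\ldots,T^{MR}_{i-1}=t_{i-1}$, $P(T^{MR}_i>t\mid\cdot)=\overline F(t)/\overline F(t_{i-1})$ for $t\ge t_{i-1}$; $N^{MR}(t)=\sup\{n:T^{MR}_n\le t\}$. Age replacement policy with interval $K$: a unit is replaced by a new independent unit with distribution $F$ upon failure or upon reaching age $K$, whichever occurs first; $N^{A,K}(t)$ counts only failures (not planned replacements) in $[0,t]$. NBU: $X\ge_{\mathrm{st}}[X-t\mid X>t]$ for all $t\ge0$. $U\le_{\mathrm{st}}V$ means $P(U>s)\le P(V>s)$ for all $s$. *)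

theory Defs
  imports "HOL-Probability.Probability"
begin

definition survival :: "(real \<Rightarrow> real) \<Rightarrow> real \<Rightarrow> real" where
  "survival F t = 1 - F t"

definition has_cdf :: "'a measure \<Rightarrow> ('a \<Rightarrow> real) \<Rightarrow> (real \<Rightarrow> real) \<Rightarrow> bool" where
  "has_cdf M X F \<longleftrightarrow> X \<in> borel_measurable M \<and>
     (\<forall>t. measure M {\<omega> \<in> space M. X \<omega> \<le> t} = F t)"

text \<open>NBU: X is stochastically larger than [X - t | X > t] for every t \<ge> 0,
  i.e. P(X - t > s | X > t) \<le> P(X > s) for all s (elementary conditional probability).\<close>
definition NBU :: "'a measure \<Rightarrow> ('a \<Rightarrow> real) \<Rightarrow> bool" where
  "NBU M X \<longleftrightarrow> (\<forall>t\<ge>0. \<forall>s.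
     measure M {\<omega> \<in> space M. X \<omega> - t > s \<and> X \<omega> > t} / measure M {\<omega> \<in> space M. X \<omega> > t}
       \<le> measure M {\<omega> \<in> space M. X \<omega> > s})"

definition past_algebra :: "'a measure \<Rightarrow> (nat \<Rightarrow> 'a \<Rightarrow> real) \<Rightarrow> nat \<Rightarrow> 'a measure" where
  "past_algebra M T i = sigma (space M)
     (\<Union>j\<in>{1..<i}. {T j -` A \<inter> space M | A. A \<in> sets borel})"

text \<open>Minimal repair process with lifetime distribution F (failure times T 1, T 2, ...;
  T 0 is unused).\<close>
definition minimal_repair :: "'a measure \<Rightarrow> (real \<Rightarrow> real) \<Rightarrow> (nat \<Rightarrow> 'a \<Rightarrow> real) \<Rightarrow> bool" where
  "minimal_repair M F T \<longleftrightarrow>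
     (\<forall>i\<ge>1. T i \<in> borel_measurable M) \<and>
     has_cdf M (T 1) F \<and>
     (\<forall>i\<ge>2. \<forall>t. AE \<omega> in M. T (i - 1) \<omega> \<le> t \<longrightarrow>
        real_cond_exp M (past_algebra M T i) (indicator {\<omega> \<in> space M. T i \<omega> > t}) \<omega>
          = survival F t / survival F (T (i - 1) \<omega>))"

definition N_MR :: "(nat \<Rightarrow> 'a \<Rightarrow> real) \<Rightarrow> real \<Rightarrow> 'a \<Rightarrow> nat" where
  "N_MR T t \<omega> = Sup (insert 0 {n. 1 \<le> n \<and> T n \<omega> \<le> t})"

text \<open>Age replacement with interval K driven by i.i.d. lifetimes Y 0, Y 1, ...:
  unit j is installed at time S j = sum_{i<j} min (Y i) K and fails (a counted event)
  iff Y j \<le> K, at time S j + Y j.\<close>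
definition N_AR :: "real \<Rightarrow> (nat \<Rightarrow> 'a \<Rightarrow> real) \<Rightarrow> real \<Rightarrow> 'a \<Rightarrow> nat" where
  "N_AR K Y t \<omega> = card {j. Y j \<omega> \<le> K \<and> (\<Sum>i<j. min (Y i \<omega>) K) + Y j \<omega> \<le> t}"

definition iid_lifetimes :: "'a measure \<Rightarrow> (real \<Rightarrow> real) \<Rightarrow> (nat \<Rightarrow> 'a \<Rightarrow> real) \<Rightarrow> bool" where
  "iid_lifetimes M F Y \<longleftrightarrow> prob_space.indep_vars M (\<lambda>_. borel) Y UNIV \<and> (\<forall>j. has_cdf M (Y j) F)"

end

theory Submission
  imports Defs
begin


lemma (in prob_space) indep_split:
  assumes iid: "indep_vars (\<lambda>_. borel) Y UNIV"
  shows "indep_var (PiM UNIV (\<lambda>_::nat. borel::real measure)) (\<lambda>\<omega> (j::nat). Y n \<omega>) (PiM UNIV (\<lambda>_. borel)) (\<lambda>\<omega> j. Y (Suc n + j) \<omega>)"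
proof -
  have "indep_var (PiM {n} (\<lambda>_. borel)) (\<lambda>\<omega>. restrict (\<lambda>i. Y i \<omega>) {n})
     (PiM {Suc n..} (\<lambda>_. borel)) (\<lambda>\<omega>. restrict (\<lambda>i. Y i \<omega>) {Suc n..})"
    by (rule indep_var_restrict[OF iid]) auto
  then have "indep_var (PiM UNIV (\<lambda>_::nat. borel::real measure)) ((\<lambda>f (j::nat). f n) \<circ> (\<lambda>\<omega>. restrict (\<lambda>i. Y i \<omega>) {n}))
     (PiM UNIV (\<lambda>_. borel)) ((\<lambda>f j. f (Suc n + j)) \<circ> (\<lambda>\<omega>. restrict (\<lambda>i. Y i \<omega>) {Suc n..}))"
    by (rule indep_var_compose) (auto intro!: measurable_PiM_single')
  then show ?thesis by (simp add: o_def)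
qed

lemma (in prob_space) indep_prod_emeasure:
  assumes ind: "indep_var N U N' Z"
    and S: "S \<in> sets (N \<Otimes>\<^sub>M N')"
  shows "emeasure M {\<omega>\<in>space M. (U \<omega>, Z \<omega>) \<in> S}
     = (\<integral>\<^sup>+ y. emeasure M {\<omega>\<in>space M. (y, Z \<omega>) \<in> S} \<partial>(distr M N U))"
proof -
  have rv: "random_variable N U" "random_variable N' Z"
   and eq: "distr M N U \<Otimes>\<^sub>M distr M N' Z
       = distr M (N \<Otimes>\<^sub>M N') (\<lambda>x. (U x, Z x))"
    using ind unfolding indep_var_distribution_eq by auto
  interpret Z: prob_space "distr M N' Z"
    by (rule prob_space_distr) (rule rv)
  have m: "(\<lambda>x. (U x, Z x)) \<in> measurable M (N \<Otimes>\<^sub>M N')"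
    using rv by measurable
  have "emeasure M {\<omega>\<in>space M. (U \<omega>, Z \<omega>) \<in> S}
     = emeasure (distr M (N \<Otimes>\<^sub>M N') (\<lambda>x. (U x, Z x))) S"
    using m S by (subst emeasure_distr) (auto simp: vimage_def Int_def conj_commute)
  also have "\<dots> = emeasure (distr M N U \<Otimes>\<^sub>M distr M N' Z) S"
    by (simp add: eq)
  also have "\<dots> = (\<integral>\<^sup>+ y. emeasure (distr M N' Z) (Pair y -` S) \<partial>(distr M N U))"
    using S by (intro Z.emeasure_pair_measure_alt) simp
  also have "\<dots> = (\<integral>\<^sup>+ y. emeasure M {\<omega>\<in>space M. (y, Z \<omega>) \<in> S} \<partial>(distr M N U))"
  proof (rule nn_integral_cong)
    fix y assume "y \<in> space (distr M N U)"
    have "Pair y -` S \<in> sets N'"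
      using S by (rule sets_Pair1)
    then show "emeasure (distr M N' Z) (Pair y -` S) = emeasure M {\<omega>\<in>space M. (y, Z \<omega>) \<in> S}"
      using rv by (subst emeasure_distr) (auto simp: vimage_def Int_def conj_commute)
  qed
  finally show ?thesis .
qed



fun cc :: "real measure \<Rightarrow> nat \<Rightarrow> real \<Rightarrow> ennreal" where
  "cc N 0 t = indicator {0..} t"
| "cc N (Suc k) t = (\<integral>\<^sup>+ x. cc N k (t - x) \<partial>N)"

lemma cc_measurable[measurable]:
  assumes "prob_space N" "sets N = sets borel"
  shows "cc N k \<in> borel_measurable borel"
proof (induction k)
  case 0 then show ?case by simp
next
  case (Suc k)
  interpret prob_space N by fact
  have [measurable]: "cc N k \<in> borel_measurable borel" by fact
  have m: "(\<lambda>(t, x). cc N k (t - x)) \<in> borel_measurable (borel \<Otimes>\<^sub>M N)"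
    using assms(2) by measurable
  show ?case
    using borel_measurable_nn_integral[OF m] by simp
qed

locale base =
  fixes M :: "'a measure" and X :: "'a \<Rightarrow> real" and F :: "real \<Rightarrow> real"
  assumes P: "prob_space M" and cdf: "has_cdf M X F"
    and nonneg: "AE \<omega> in M. X \<omega> \<ge> 0"
    and cont: "continuous_on UNIV F"
    and nbu: "NBU M X"
    and pos: "\<forall>t\<ge>0. survival F t > 0"
begin

interpretation prob_space M by (rule P)

definition "nu = distr M borel X"

lemma Xm[measurable]: "X \<in> borel_measurable M"
  using cdf by (simp add: has_cdf_def)

lemma F_eq: "F t = measure M {\<omega>\<in>space M. X \<omega> \<le> t}"
  using cdf by (simp add: has_cdf_def)

lemma nu_prob: "prob_space nu"
  unfolding nu_def by (rule prob_space_distr) simp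

lemma sets_nu[measurable_cong, simp]: "sets nu = sets borel"
  by (simp add: nu_def)

lemma space_nu[simp]: "space nu = UNIV"
  by (simp add: nu_def)

lemma nu_meas: "A \<in> sets borel \<Longrightarrow> measure nu A = measure M {\<omega>\<in>space M. X \<omega> \<in> A}"
  unfolding nu_def by (subst measure_distr) (auto simp: vimage_def Int_def conj_commute)

lemma F_nu: "F t = measure nu {..t}"
  by (simp add: nu_meas F_eq)

lemma F_ge0: "F t \<ge> 0" by (simp add: F_eq)
lemma F_le1: "F t \<le> 1" by (simp add: F_eq)

lemma F_mono: "s \<le> t \<Longrightarrow> F s \<le> F t"
  unfolding F_eq by (intro finite_measure_mono) auto

lemma surv: "survival F t = measure M {\<omega>\<in>space M. X \<omega> > t}"
proof -
  have "{\<omega>\<in>space M. X \<omega> > t} = space M - {\<omega>\<in>space M. X \<omega> \<le> t}" by auto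
  then show ?thesis
    by (simp add: survival_def F_eq prob_compl)
qed

lemma F_neg: "t < 0 \<Longrightarrow> F t = 0"
proof -
  assume t: "t < 0"
  have "emeasure M {\<omega>\<in>space M. X \<omega> < 0} = 0"
    using nonneg by (subst (asm) AE_iff_measurable[where N="{\<omega>\<in>space M. X \<omega> < 0}"]) auto
  then have "measure M {\<omega>\<in>space M. X \<omega> < 0} = 0" by (simp add: measure_def)
  moreover have "measure M {\<omega>\<in>space M. X \<omega> \<le> t} \<le> measure M {\<omega>\<in>space M. X \<omega> < 0}"
    using t by (intro finite_measure_mono) auto
  ultimately show ?thesis using F_ge0[of t] F_eq[of t] by linarith
qed

lemma surv_pos: "survival F t > 0"
  using pos F_neg[of t] by (cases "t \<ge> 0") (auto simp: survival_def)

lemma surv_le1: "survival F t \<le> 1" using F_ge0[of t] by (simp add: survival_def)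

lemma surv_anti: "s \<le> t \<Longrightarrow> survival F t \<le> survival F s"
  using F_mono[of s t] by (simp add: survival_def)

lemma nbu_mult:
  assumes a: "a \<ge> 0" and b: "b \<ge> 0"
  shows "survival F (a + b) \<le> survival F a * survival F b"
proof -
  have "measure M {\<omega> \<in> space M. X \<omega> - a > b \<and> X \<omega> > a} / measure M {\<omega> \<in> space M. X \<omega> > a}
       \<le> measure M {\<omega> \<in> space M. X \<omega> > b}"
    using nbu a by (auto simp: NBU_def)
  moreover have "{\<omega> \<in> space M. X \<omega> - a > b \<and> X \<omega> > a} = {\<omega> \<in> space M. X \<omega> > a + b}"
    using b by auto
  ultimately have "survival F (a+b) / survival F a \<le> survival F b"
    by (simp add: surv)
  then show ?thesis
    using surv_pos[of a] by (simp add: divide_le_eq mult.commute)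
qed

lemma nu_neg: "emeasure nu {..<0} = 0"
proof -
  have "emeasure nu {..<0} = emeasure M {\<omega>\<in>space M. X \<omega> < 0}"
    unfolding nu_def by (subst emeasure_distr) (auto simp: vimage_def Int_def conj_commute)
  also have "\<dots> = 0"
    using nonneg by (subst (asm) AE_iff_measurable[where N="{\<omega>\<in>space M. X \<omega> < 0}"]) auto
  finally show ?thesis .
qed

lemma cc_meas[measurable]: "cc nu k \<in> borel_measurable borel"
  by (rule cc_measurable[OF nu_prob]) simp

lemma cc1: "cc nu (Suc 0) t = ennreal (F t)"
proof -
  have "cc nu (Suc 0) t = (\<integral>\<^sup>+ x. indicator {..t} x \<partial>nu)"
    by (auto intro!: nn_integral_cong simp: indicator_def)
  also have "\<dots> = emeasure nu {..t}" by simp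
  also have "\<dots> = ennreal (F t)"
  proof -
    interpret N: prob_space nu by (rule nu_prob)
    show ?thesis by (simp add: F_nu N.emeasure_eq_measure)
  qed
  finally show ?thesis .
qed

lemma Qlemma:
  assumes K: "K \<ge> 0"
  shows "ennreal (survival F K) * cc nu (Suc k) (t - K)
     \<le> (\<integral>\<^sup>+ y. indicator {K<..} y * cc nu k (t - y) \<partial>nu)"
proof (induction k arbitrary: t)
  case 0
  interpret N: prob_space nu by (rule nu_prob)
  have rhs: "(\<integral>\<^sup>+ y. indicator {K<..} y * cc nu 0 (t - y) \<partial>nu) = emeasure nu {K<..t}"
  proof -
    have "(\<integral>\<^sup>+ y. indicator {K<..} y * cc nu 0 (t - y) \<partial>nu) = (\<integral>\<^sup>+ y. indicator {K<..t} y \<partial>nu)"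
      by (auto intro!: nn_integral_cong simp: indicator_def)
    then show ?thesis by simp
  qed
  show ?case
  proof (cases "t < K")
    case True
    then show ?thesis using F_neg[of "t - K"] by (simp only: cc1) simp
  next
    case False
    have "measure nu {K<..t} = measure nu ({..t} - {..K})"
      by (rule arg_cong[where f="measure nu"]) auto
    also have "\<dots> = F t - F K"
      using False by (subst N.finite_measure_Diff) (auto simp: F_nu)
    finally have m: "measure nu {K<..t} = F t - F K" .
    have "survival F t \<le> survival F K * survival F (t - K)"
      using nbu_mult[of K "t - K"] False K by simp
    then have "survival F K * F (t - K) \<le> F t - F K"
      by (simp add: survival_def algebra_simps)
    then show ?thesis
      unfolding cc1 rhs N.emeasure_eq_measure m
      using surv_pos[of K] F_ge0[of "t - K"]
      by (simp add: ennreal_mult[symmetric] ennreal_leI)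
  qed
next
  case (Suc k)
  interpret N: prob_space nu by (rule nu_prob)
  interpret NN: pair_sigma_finite nu nu
    by (simp add: N.sigma_finite_measure_axioms pair_sigma_finite.intro)
  have "ennreal (survival F K) * cc nu (Suc (Suc k)) (t - K)
      = (\<integral>\<^sup>+ x. ennreal (survival F K) * cc nu (Suc k) ((t - x) - K) \<partial>nu)"
    by (simp add: nn_integral_cmult algebra_simps)
  also have "\<dots> \<le> (\<integral>\<^sup>+ x. (\<integral>\<^sup>+ y. indicator {K<..} y * cc nu k ((t - x) - y) \<partial>nu) \<partial>nu)"
    by (intro nn_integral_mono Suc.IH)
  also have "\<dots> = (\<integral>\<^sup>+ y. (\<integral>\<^sup>+ x. indicator {K<..} y * cc nu k ((t - y) - x) \<partial>nu) \<partial>nu)"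
    by (subst NN.Fubini') (auto simp: algebra_simps)
  also have "\<dots> = (\<integral>\<^sup>+ y. indicator {K<..} y * cc nu (Suc k) (t - y) \<partial>nu)"
    by (simp add: nn_integral_cmult)
  finally show ?case .
qed

end


lemma (in prob_space) split_bound:
  assumes iid: "indep_vars (\<lambda>_. borel) Y UNIV"
    and S: "S \<in> sets (PiM UNIV (\<lambda>_::nat. borel::real measure) \<Otimes>\<^sub>M PiM UNIV (\<lambda>_::nat. borel::real measure))"
    and g[measurable]: "g \<in> borel_measurable borel"
    and le: "\<And>f. emeasure M {\<omega>\<in>space M. (f, (\<lambda>j. Y (Suc n + j) \<omega>)) \<in> S} \<le> g (f 0)"
  shows "emeasure M {\<omega>\<in>space M. ((\<lambda>_::nat. Y n \<omega>), (\<lambda>j. Y (Suc n + j) \<omega>)) \<in> S}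
     \<le> (\<integral>\<^sup>+ y. g y \<partial>(distr M borel (Y n)))"
proof -
  have Yn[measurable]: "Y n \<in> borel_measurable M"
    using iid unfolding indep_vars_def by auto
  have U[measurable]: "(\<lambda>\<omega> (_::nat). Y n \<omega>) \<in> measurable M (PiM UNIV (\<lambda>_::nat. borel))"
    by (auto intro!: measurable_PiM_single')
  have "emeasure M {\<omega>\<in>space M. ((\<lambda>_::nat. Y n \<omega>), (\<lambda>j. Y (Suc n + j) \<omega>)) \<in> S}
     = (\<integral>\<^sup>+ f. emeasure M {\<omega>\<in>space M. (f, (\<lambda>j. Y (Suc n + j) \<omega>)) \<in> S} \<partial>(distr M (PiM UNIV (\<lambda>_. borel)) (\<lambda>\<omega> (_::nat). Y n \<omega>)))"
    by (rule indep_prod_emeasure[OF indep_split[OF iid] S])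
  also have "\<dots> \<le> (\<integral>\<^sup>+ f. g (f 0) \<partial>(distr M (PiM UNIV (\<lambda>_. borel)) (\<lambda>\<omega> (_::nat). Y n \<omega>)))"
    by (rule nn_integral_mono) (rule le)
  also have "\<dots> = (\<integral>\<^sup>+ \<omega>. g (Y n \<omega>) \<partial>M)"
    by (subst nn_integral_distr) auto
  also have "\<dots> = (\<integral>\<^sup>+ y. g y \<partial>(distr M borel (Y n)))"
    by (subst nn_integral_distr) auto
  finally show ?thesis .
qed

fun ARA :: "real \<Rightarrow> nat \<Rightarrow> nat \<Rightarrow> (nat \<Rightarrow> real) \<Rightarrow> real \<Rightarrow> bool" where
  "ARA K m 0 y t = True"
| "ARA K 0 (Suc k) y t = False"
| "ARA K (Suc m) (Suc k) y t = (if y 0 \<le> K then y 0 \<le> t \<and> ARA K m k (\<lambda>j. y (Suc j)) (t - y 0)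
      else ARA K m (Suc k) (\<lambda>j. y (Suc j)) (t - K))"

lemma ARA_meas:
  "Measurable.pred (PiM UNIV (\<lambda>_::nat. borel) \<Otimes>\<^sub>M borel) (\<lambda>p. ARA K m k (fst p) (snd p))"
proof (induction m arbitrary: k)
  case 0
  then show ?case by (cases k) auto
next
  case (Suc m)
  show ?case
  proof (cases k)
    case 0 then show ?thesis by simp
  next
    case (Suc k')
    have sh: "(\<lambda>p::(nat\<Rightarrow>real)\<times>real. ((\<lambda>j. fst p (Suc j)), snd p - fst p 0)) \<in> measurable (PiM UNIV (\<lambda>_::nat. borel) \<Otimes>\<^sub>M borel) (PiM UNIV (\<lambda>_::nat. borel) \<Otimes>\<^sub>M borel)"
      by (auto intro!: measurable_Pair measurable_PiM_single')
    have sh2: "(\<lambda>p::(nat\<Rightarrow>real)\<times>real. ((\<lambda>j. fst p (Suc j)), snd p - K)) \<in> measurable (PiM UNIV (\<lambda>_::nat. borel) \<Otimes>\<^sub>M borel) (PiM UNIV (\<lambda>_::nat. borel) \<Otimes>\<^sub>M borel)"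
      by (auto intro!: measurable_Pair measurable_PiM_single')
    have p1: "Measurable.pred (PiM UNIV (\<lambda>_::nat. borel) \<Otimes>\<^sub>M borel) (\<lambda>p. ARA K m k' (\<lambda>j. fst p (Suc j)) (snd p - fst p 0))"
      using measurable_compose[OF sh Suc.IH[of k']] by simp
    have p2: "Measurable.pred (PiM UNIV (\<lambda>_::nat. borel) \<Otimes>\<^sub>M borel) (\<lambda>p. ARA K m (Suc k') (\<lambda>j. fst p (Suc j)) (snd p - K))"
      using measurable_compose[OF sh2 Suc.IH[of "Suc k'"]] by simp
    have p0: "Measurable.pred (PiM UNIV (\<lambda>_::nat. borel) \<Otimes>\<^sub>M borel) (\<lambda>p. fst p 0 \<le> K)"
      by measurable
    have [measurable]: "(\<lambda>p. fst p 0) \<in> borel_measurable (PiM UNIV (\<lambda>_::nat. borel) \<Otimes>\<^sub>M borel)"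
      by measurable
    have [measurable]: "(\<lambda>p. snd p) \<in> borel_measurable (PiM UNIV (\<lambda>_::nat. borel) \<Otimes>\<^sub>M (borel::real measure))"
      by measurable
    have p3: "Measurable.pred (PiM UNIV (\<lambda>_::nat. borel) \<Otimes>\<^sub>M borel) (\<lambda>p::(nat\<Rightarrow>real)\<times>real. fst p 0 \<le> snd p)"
      by measurable
    show ?thesis unfolding Suc using p0 p1 p2 p3 by simp
  qed
qed

lemma ARA_mono: "ARA K m k y t \<Longrightarrow> ARA K (Suc m) k y t"
proof (induction m arbitrary: k y t)
  case 0 then show ?case by (cases k) auto
next
  case (Suc m)
  show ?case
  proof (cases k)
    case 0 then show ?thesis by simp
  next
    case (Suc k')
    show ?thesis
      unfolding Suc
      apply (subst ARA.simps(3))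
      using Suc.prems unfolding Suc
      apply (subst (asm) ARA.simps(3))
      by (auto simp del: ARA.simps split: if_splits intro: Suc.IH)
  qed
qed

definition ARset :: "real \<Rightarrow> (nat \<Rightarrow> real) \<Rightarrow> real \<Rightarrow> nat set" where
  "ARset K y t = {j. y j \<le> K \<and> (\<Sum>i<j. min (y i) K) + y j \<le> t}"

lemma ARset_shift:
  "ARset K y t = (if y 0 \<le> K \<and> y 0 \<le> t then {0} else {}) \<union> Suc ` ARset K (\<lambda>j. y (Suc j)) (t - min (y 0) K)"
proof -
  have "j \<in> ARset K y t \<longleftrightarrow> j \<in> (if y 0 \<le> K \<and> y 0 \<le> t then {0} else {}) \<union> Suc ` ARset K (\<lambda>j. y (Suc j)) (t - min (y 0) K)" for j
  proof (cases j)
    case 0 then show ?thesis by (auto simp: ARset_def)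
  next
    case (Suc j')
    have "(\<Sum>i<Suc j'. min (y i) K) = min (y 0) K + (\<Sum>i<j'. min (y (Suc i)) K)"
      by (subst sum.lessThan_Suc_shift) simp
    then show ?thesis using Suc by (auto simp: ARset_def algebra_simps)
  qed
  then show ?thesis by blast
qed

lemma ARset_empty:
  assumes "\<forall>j. y j \<ge> 0" "t < 0" shows "ARset K y t = {}"
proof -
  have "(\<Sum>i<j. min (y i) K) + y j \<ge> 0" if "y j \<le> K" for j
  proof -
    have "K \<ge> 0" using that assms(1) by (meson order_trans)
    then have "(\<Sum>i<j. min (y i) K) \<ge> 0" using assms(1) by (intro sum_nonneg) auto
    then show ?thesis using assms(1) by (meson add_nonneg_nonneg)
  qed
  then show ?thesis using assms(2) unfolding ARset_def by force
qed

lemma ARset_ARA: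
  "(\<forall>j. y j \<ge> 0) \<Longrightarrow> ARset K y t \<subseteq> {..<m} \<Longrightarrow> k \<le> card (ARset K y t) \<Longrightarrow> ARA K m k y t"
proof (induction m arbitrary: y t k)
  case 0
  then show ?case by (cases k) auto
next
  case (Suc m)
  show ?case
  proof (cases k)
    case 0 then show ?thesis by simp
  next
    case (Suc k')
    let ?y = "\<lambda>j. y (Suc j)"
    let ?S = "ARset K ?y (t - min (y 0) K)"
    have eq: "ARset K y t = (if y 0 \<le> K \<and> y 0 \<le> t then {0} else {}) \<union> Suc ` ?S"
      by (rule ARset_shift)
    have sub: "?S \<subseteq> {..<m}"
    proof
      fix j assume "j \<in> ?S"
      then have "Suc j \<in> ARset K y t" using eq by auto
      then show "j \<in> {..<m}" using Suc.prems(2) by auto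
    qed
    have fin: "finite ?S" using sub finite_subset by blast
    have nn: "\<forall>j. ?y j \<ge> 0" using Suc.prems(1) by auto
    have cS: "card (Suc ` ?S) = card ?S" by (simp add: card_image)
    show ?thesis
    proof (cases "y 0 \<le> K")
      case True
      show ?thesis
      proof (cases "y 0 \<le> t")
        case True2: True
        have "card (ARset K y t) = Suc (card ?S)"
          using eq True True2 fin cS by (simp add: card_insert_if image_iff)
        then have "k' \<le> card ?S" using Suc.prems(3) Suc by simp
        then have "ARA K m k' ?y (t - y 0)"
          using Suc.IH[OF nn] sub True by simp
        then show ?thesis using Suc True True2 by simp
      next
        case False
        have "?S = {}" using ARset_empty[OF nn] False True by simp
        then have "ARset K y t = {}" using eq False by simp
        then show ?thesis using Suc.prems(3) Suc by simp
      qed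
    next
      case False
      have "card (ARset K y t) = card ?S" using eq False cS by simp
      then have "ARA K m (Suc k') ?y (t - K)"
        using Suc.IH[OF nn] sub False Suc.prems(3) Suc by simp
      then show ?thesis using Suc False by simp
    qed
  qed
qed



lemma space_PiM_UNIV[simp]: "space (PiM UNIV (\<lambda>_::nat. borel::real measure)) = UNIV"
  by (auto simp: space_PiM)

locale ar = base +
  fixes M2 :: "'c measure" and Y :: "nat \<Rightarrow> 'c \<Rightarrow> real" and K :: real
  assumes P2: "prob_space M2" and iid: "iid_lifetimes M2 F Y" and Kpos: "K > 0"
begin

interpretation M2: prob_space M2 by (rule P2)

lemma indepY: "M2.indep_vars (\<lambda>_. borel) Y UNIV"
  using iid by (simp add: iid_lifetimes_def)

lemma Ym[measurable]: "Y j \<in> borel_measurable M2"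
  using iid by (simp add: iid_lifetimes_def has_cdf_def)

lemma lawY: "distr M2 borel (Y j) = nu"
proof (rule cdf_unique)
  show "real_distribution (distr M2 borel (Y j))"
    by (simp add: real_distribution_def real_distribution_axioms_def M2.prob_space_distr)
  show "real_distribution nu"
    using nu_prob by (simp add: real_distribution_def real_distribution_axioms_def)
  show "cdf (distr M2 borel (Y j)) = cdf nu"
  proof
    fix x
    have "measure (distr M2 borel (Y j)) {..x} = measure M2 {\<omega>\<in>space M2. Y j \<omega> \<le> x}"
      by (subst measure_distr) (auto simp: vimage_def Int_def conj_commute)
    also have "\<dots> = F x" using iid by (simp add: iid_lifetimes_def has_cdf_def)
    finally show "cdf (distr M2 borel (Y j)) x = cdf nu x"
      by (simp add: cdf_def F_nu)
  qed
qed

lemma Y_nonneg: "AE \<omega> in M2. \<forall>j. Y j \<omega> \<ge> 0"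
proof (subst AE_all_countable, intro allI)
  fix j
  have "emeasure M2 {\<omega>\<in>space M2. Y j \<omega> < 0} = emeasure (distr M2 borel (Y j)) {..<0}"
    by (subst emeasure_distr) (auto simp: vimage_def Int_def conj_commute)
  also have "\<dots> = 0" by (simp add: lawY nu_neg)
  finally show "AE \<omega> in M2. Y j \<omega> \<ge> 0"
    by (subst AE_iff_measurable[where N="{\<omega>\<in>space M2. Y j \<omega> < 0}"]) auto
qed

lemma nu_gt: "emeasure nu {K<..} = ennreal (survival F K)"
proof -
  interpret prob_space M by (rule P)
  interpret N: prob_space nu by (rule nu_prob)
  have "measure nu {K<..} = survival F K"
    by (simp add: nu_meas surv)
  then show ?thesis by (simp add: N.emeasure_eq_measure)
qed

lemma AR_bound:
  "emeasure M2 {\<omega>\<in>space M2. ARA K m k (\<lambda>j. Y (n + j) \<omega>) t} \<le> (if k = 0 then 1 else cc nu k t)"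
proof (induction m arbitrary: n k t)
  case 0
  show ?case
  proof (cases k)
    case 0 then show ?thesis by (simp add: M2.emeasure_le_1)
  next
    case (Suc k') then show ?thesis by simp
  qed
next
  case (Suc m)
  show ?case
  proof (cases k)
    case 0 then show ?thesis by (simp add: M2.emeasure_le_1)
  next
    case (Suc k')
    define Z where "Z = (\<lambda>\<omega> j. Y (Suc n + j) \<omega>)"
    define S1 where "S1 = {p::(nat\<Rightarrow>real)\<times>(nat\<Rightarrow>real). fst p 0 \<le> K \<and> fst p 0 \<le> t \<and> ARA K m k' (snd p) (t - fst p 0)}"
    define S2 where "S2 = {p::(nat\<Rightarrow>real)\<times>(nat\<Rightarrow>real). \<not> fst p 0 \<le> K \<and> ARA K m (Suc k') (snd p) (t - K)}"
    have pm: "(\<lambda>p::(nat\<Rightarrow>real)\<times>(nat\<Rightarrow>real). (snd p, t - fst p 0)) \<in> measurable (PiM UNIV (\<lambda>_::nat. borel) \<Otimes>\<^sub>M PiM UNIV (\<lambda>_::nat. borel)) (PiM UNIV (\<lambda>_::nat. borel) \<Otimes>\<^sub>M borel)"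
      by measurable
    have pm2: "(\<lambda>p::(nat\<Rightarrow>real)\<times>(nat\<Rightarrow>real). (snd p, t - K)) \<in> measurable (PiM UNIV (\<lambda>_::nat. borel) \<Otimes>\<^sub>M PiM UNIV (\<lambda>_::nat. borel)) (PiM UNIV (\<lambda>_::nat. borel) \<Otimes>\<^sub>M borel)"
      by measurable
    have q1: "Measurable.pred (PiM UNIV (\<lambda>_::nat. borel) \<Otimes>\<^sub>M PiM UNIV (\<lambda>_::nat. borel)) (\<lambda>p::(nat\<Rightarrow>real)\<times>(nat\<Rightarrow>real). ARA K m k' (snd p) (t - fst p 0))"
      using measurable_compose[OF pm ARA_meas] by simp
    have q2: "Measurable.pred (PiM UNIV (\<lambda>_::nat. borel) \<Otimes>\<^sub>M PiM UNIV (\<lambda>_::nat. borel)) (\<lambda>p::(nat\<Rightarrow>real)\<times>(nat\<Rightarrow>real). ARA K m (Suc k') (snd p) (t - K))"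
      using measurable_compose[OF pm2 ARA_meas] by simp
    have [measurable]: "(\<lambda>p::(nat\<Rightarrow>real)\<times>(nat\<Rightarrow>real). fst p 0) \<in> borel_measurable (PiM UNIV (\<lambda>_::nat. borel) \<Otimes>\<^sub>M PiM UNIV (\<lambda>_::nat. borel))"
      by measurable
    have S1m: "S1 \<in> sets (PiM UNIV (\<lambda>_::nat. borel) \<Otimes>\<^sub>M PiM UNIV (\<lambda>_::nat. borel))"
    proof -
      have "{p \<in> space (PiM UNIV (\<lambda>_::nat. borel) \<Otimes>\<^sub>M PiM UNIV (\<lambda>_::nat. borel)). fst p 0 \<le> K \<and> fst p 0 \<le> t \<and> ARA K m k' (snd p) (t - fst p 0)} \<in> sets (PiM UNIV (\<lambda>_::nat. borel) \<Otimes>\<^sub>M PiM UNIV (\<lambda>_::nat. borel))"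
        using q1 by measurable
      then show ?thesis by (simp add: S1_def space_pair_measure)
    qed
    have S2m: "S2 \<in> sets (PiM UNIV (\<lambda>_::nat. borel) \<Otimes>\<^sub>M PiM UNIV (\<lambda>_::nat. borel))"
    proof -
      have "{p \<in> space (PiM UNIV (\<lambda>_::nat. borel) \<Otimes>\<^sub>M PiM UNIV (\<lambda>_::nat. borel)). \<not> fst p 0 \<le> K \<and> ARA K m (Suc k') (snd p) (t - K)} \<in> sets (PiM UNIV (\<lambda>_::nat. borel) \<Otimes>\<^sub>M PiM UNIV (\<lambda>_::nat. borel))"
        using q2 by measurable
      then show ?thesis by (simp add: S2_def space_pair_measure)
    qed
    have Zm: "Z \<in> measurable M2 (PiM UNIV (\<lambda>_::nat. borel))"
      unfolding Z_def by (auto intro!: measurable_PiM_single')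
    have Um: "(\<lambda>\<omega> (_::nat). Y n \<omega>) \<in> measurable M2 (PiM UNIV (\<lambda>_::nat. borel))"
      by (auto intro!: measurable_PiM_single')
    define E1 where "E1 = {\<omega>\<in>space M2. ((\<lambda>_::nat. Y n \<omega>), (\<lambda>j. Y (Suc n + j) \<omega>)) \<in> S1}"
    define E2 where "E2 = {\<omega>\<in>space M2. ((\<lambda>_::nat. Y n \<omega>), (\<lambda>j. Y (Suc n + j) \<omega>)) \<in> S2}"
    have E1m: "E1 \<in> sets M2"
    proof -
      have "(\<lambda>\<omega>. ((\<lambda>_::nat. Y n \<omega>), Z \<omega>)) \<in> measurable M2 (PiM UNIV (\<lambda>_::nat. borel) \<Otimes>\<^sub>M PiM UNIV (\<lambda>_::nat. borel))"
        using Zm Um by measurable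
      then have "(\<lambda>\<omega>. ((\<lambda>_::nat. Y n \<omega>), Z \<omega>)) -` S1 \<inter> space M2 \<in> sets M2"
        using S1m by (rule measurable_sets)
      then show ?thesis unfolding E1_def Z_def by (simp add: vimage_def Int_def conj_commute)
    qed
    have E2m: "E2 \<in> sets M2"
    proof -
      have "(\<lambda>\<omega>. ((\<lambda>_::nat. Y n \<omega>), Z \<omega>)) \<in> measurable M2 (PiM UNIV (\<lambda>_::nat. borel) \<Otimes>\<^sub>M PiM UNIV (\<lambda>_::nat. borel))"
        using Zm Um by measurable
      then have "(\<lambda>\<omega>. ((\<lambda>_::nat. Y n \<omega>), Z \<omega>)) -` S2 \<inter> space M2 \<in> sets M2"
        using S2m by (rule measurable_sets)
      then show ?thesis unfolding E2_def Z_def by (simp add: vimage_def Int_def conj_commute)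
    qed
    have seteq: "{\<omega>\<in>space M2. ARA K (Suc m) k (\<lambda>j. Y (n + j) \<omega>) t} = E1 \<union> E2"
      unfolding E1_def E2_def S1_def S2_def Suc by (auto simp: add_Suc_right)
    have b1: "emeasure M2 E1 \<le> (\<integral>\<^sup>+ y. indicator {..K} y * cc nu k' (t - y) \<partial>nu)"
    proof -
    have "emeasure M2 E1 \<le> (\<integral>\<^sup>+ y. indicator {..K} y * cc nu k' (t - y) \<partial>(distr M2 borel (Y n)))"
      unfolding E1_def
    proof (rule M2.split_bound[OF indepY S1m])
      show "(\<lambda>y. indicator {..K} y * cc nu k' (t - y)) \<in> borel_measurable borel" by measurable
      fix f :: "nat \<Rightarrow> real"
      show "emeasure M2 {\<omega> \<in> space M2. (f, \<lambda>j. Y (Suc n + j) \<omega>) \<in> S1} \<le> indicator {..K} (f 0) * cc nu k' (t - f 0)"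
      proof (cases "f 0 \<le> K \<and> f 0 \<le> t")
        case True
        have "emeasure M2 {\<omega> \<in> space M2. (f, \<lambda>j. Y (Suc n + j) \<omega>) \<in> S1}
            = emeasure M2 {\<omega> \<in> space M2. ARA K m k' (\<lambda>j. Y (Suc n + j) \<omega>) (t - f 0)}"
          using True by (simp add: S1_def)
        also have "\<dots> \<le> (if k' = 0 then 1 else cc nu k' (t - f 0))" by (rule Suc.IH)
        also have "\<dots> = indicator {..K} (f 0) * cc nu k' (t - f 0)"
          using True by (auto simp: indicator_def)
        finally show ?thesis .
      next
        case False
        then have e: "{\<omega> \<in> space M2. (f, \<lambda>j. Y (Suc n + j) \<omega>) \<in> S1} = {}" by (auto simp: S1_def)
        show ?thesis unfolding e by simp
      qed
    qed
    then show ?thesis by (simp add: lawY)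
    qed
    have b2: "emeasure M2 E2 \<le> (\<integral>\<^sup>+ y. indicator {K<..} y * cc nu (Suc k') (t - K) \<partial>nu)"
    proof -
    have "emeasure M2 E2 \<le> (\<integral>\<^sup>+ y. indicator {K<..} y * cc nu (Suc k') (t - K) \<partial>(distr M2 borel (Y n)))"
      unfolding E2_def
    proof (rule M2.split_bound[OF indepY S2m])
      show "(\<lambda>y. indicator {K<..} y * cc nu (Suc k') (t - K)) \<in> borel_measurable borel" by measurable
      fix f :: "nat \<Rightarrow> real"
      show "emeasure M2 {\<omega> \<in> space M2. (f, \<lambda>j. Y (Suc n + j) \<omega>) \<in> S2} \<le> indicator {K<..} (f 0) * cc nu (Suc k') (t - K)"
      proof (cases "f 0 \<le> K")
        case False
        have "emeasure M2 {\<omega> \<in> space M2. (f, \<lambda>j. Y (Suc n + j) \<omega>) \<in> S2}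
            = emeasure M2 {\<omega> \<in> space M2. ARA K m (Suc k') (\<lambda>j. Y (Suc n + j) \<omega>) (t - K)}"
          using False by (simp add: S2_def)
        also have "\<dots> \<le> (if Suc k' = 0 then 1 else cc nu (Suc k') (t - K))" by (rule Suc.IH)
        also have "\<dots> = indicator {K<..} (f 0) * cc nu (Suc k') (t - K)"
          using False by (auto simp: indicator_def)
        finally show ?thesis .
      next
        case True
        then have e: "{\<omega> \<in> space M2. (f, \<lambda>j. Y (Suc n + j) \<omega>) \<in> S2} = {}" by (auto simp: S2_def)
        show ?thesis unfolding e by simp
      qed
    qed
    then show ?thesis by (simp add: lawY)
    qed
    have i2: "(\<integral>\<^sup>+ y. indicator {K<..} y * cc nu (Suc k') (t - K) \<partial>nu)
        = ennreal (survival F K) * cc nu (Suc k') (t - K)"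
      by (subst nn_integral_multc) (auto simp: nu_gt mult.commute)
    have "emeasure M2 {\<omega>\<in>space M2. ARA K (Suc m) k (\<lambda>j. Y (n + j) \<omega>) t}
        \<le> emeasure M2 E1 + emeasure M2 E2"
      unfolding seteq using E1m E2m by (rule emeasure_subadditive)
    also have "\<dots> \<le> (\<integral>\<^sup>+ y. indicator {..K} y * cc nu k' (t - y) \<partial>nu)
                  + (\<integral>\<^sup>+ y. indicator {K<..} y * cc nu k' (t - y) \<partial>nu)"
      using b1 b2 i2 Qlemma[of K k' t] Kpos by (intro add_mono) auto
    also have "\<dots> = (\<integral>\<^sup>+ y. indicator {..K} y * cc nu k' (t - y) + indicator {K<..} y * cc nu k' (t - y) \<partial>nu)"
      by (subst nn_integral_add) auto
    also have "\<dots> = cc nu (Suc k') t"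
      by (auto intro!: nn_integral_cong simp: indicator_def)
    finally show ?thesis using Suc by simp
  qed
qed

end


locale mr = base +
  fixes M1 :: "'b measure" and T :: "nat \<Rightarrow> 'b \<Rightarrow> real"
  assumes P1: "prob_space M1" and MR: "minimal_repair M1 F T"
begin

interpretation M1: prob_space M1 by (rule P1)

lemma Tm[measurable]: "1 \<le> k \<Longrightarrow> T k \<in> borel_measurable M1"
  using MR by (simp add: minimal_repair_def)

lemma Fm[measurable]: "F \<in> borel_measurable borel"
  using cont by (rule borel_measurable_continuous_onI)

lemma survm[measurable]: "survival F \<in> borel_measurable borel"
  unfolding survival_def[abs_def] by measurable

lemma T1_le: "measure M1 {\<omega>\<in>space M1. T 1 \<omega> \<le> t} = F t"
  using MR by (simp add: minimal_repair_def has_cdf_def)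

lemma past_gen_sub:
  assumes k: "1 \<le> k"
  shows "(\<Union>j\<in>{1..<Suc k}. {T j -` A \<inter> space M1 | A. A \<in> sets borel}) \<subseteq> sets M1"
proof
  fix x assume "x \<in> (\<Union>j\<in>{1..<Suc k}. {T j -` A \<inter> space M1 | A. A \<in> sets borel})"
  then obtain j A where "j \<in> {1..<Suc k}" "A \<in> sets borel" "x = T j -` A \<inter> space M1" by auto
  then show "x \<in> sets M1" using Tm[of j] by (auto intro: measurable_sets)
qed

lemma past_sub:
  assumes k: "1 \<le> k"
  shows "subalgebra M1 (past_algebra M1 T (Suc k))"
proof -
  note gen = past_gen_sub[OF k]
  then have pow: "(\<Union>j\<in>{1..<Suc k}. {T j -` A \<inter> space M1 | A. A \<in> sets borel}) \<subseteq> Pow (space M1)"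
    using sets.sets_into_space by blast
  show ?thesis
    unfolding subalgebra_def past_algebra_def
    using pow gen by (simp add: sets_measure_of space_measure_of sets.sigma_sets_subset)
qed

lemma past_set:
  assumes k: "1 \<le> k" and B: "B \<in> sets borel"
  shows "{\<omega>\<in>space M1. T k \<omega> \<in> B} \<in> sets (past_algebra M1 T (Suc k))"
proof -
  let ?G = "(\<Union>j\<in>{1..<Suc k}. {T j -` A \<inter> space M1 | A. A \<in> sets borel})"
  note gen = past_gen_sub[OF k]
  then have pow: "?G \<subseteq> Pow (space M1)" using sets.sets_into_space by blast
  have "T k -` B \<inter> space M1 \<in> {T k -` A \<inter> space M1 | A. A \<in> sets borel}" using B by auto
  then have "T k -` B \<inter> space M1 \<in> ?G" using k by (intro UN_I[of k]) auto
  then have "T k -` B \<inter> space M1 \<in> sigma_sets (space M1) ?G" by (rule sigma_sets.Basic)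
  moreover have "{\<omega>\<in>space M1. T k \<omega> \<in> B} = T k -` B \<inter> space M1" by auto
  ultimately show ?thesis
    unfolding past_algebra_def using pow by (simp add: sets_measure_of)
qed

lemma key:
  assumes k: "1 \<le> k" and B: "B \<in> sets borel" and Bs: "\<And>x. x \<in> B \<Longrightarrow> x \<le> s"
  shows "measure M1 {\<omega>\<in>space M1. T k \<omega> \<in> B \<and> T (Suc k) \<omega> > s}
       = (\<integral>\<omega>. indicator {\<omega>\<in>space M1. T k \<omega> \<in> B} \<omega> * (survival F s / survival F (T k \<omega>)) \<partial>M1)"
proof -
  let ?G = "past_algebra M1 T (Suc k)"
  let ?A = "{\<omega>\<in>space M1. T k \<omega> \<in> B}"
  let ?f = "indicator {\<omega>\<in>space M1. T (Suc k) \<omega> > s} :: 'b \<Rightarrow> real"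
  have sub: "subalgebra M1 ?G" by (rule past_sub[OF k])
  have AG: "?A \<in> sets ?G" by (rule past_set[OF k B])
  interpret S: sigma_finite_subalgebra M1 ?G
    by (rule finite_measure_subalgebra_is_sigma_finite)
       (simp add: finite_measure_subalgebra_def finite_measure_subalgebra_axioms_def sub M1.finite_measure_axioms)
  have Skm[measurable]: "T (Suc k) \<in> borel_measurable M1" "T k \<in> borel_measurable M1" using k by auto
  have fi: "integrable M1 ?f"
    by (rule integrable_real_indicator) (auto simp: M1.emeasure_eq_measure)
  have "(\<integral>x \<in> ?A. ?f x \<partial>M1) = (\<integral>x \<in> ?A. real_cond_exp M1 ?G ?f x \<partial>M1)"
    by (rule S.real_cond_exp_intA[OF fi AG])
  also have "\<dots> = (\<integral>\<omega>. indicator ?A \<omega> * (survival F s / survival F (T k \<omega>)) \<partial>M1)"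
    unfolding set_lebesgue_integral_def
  proof (rule integral_cong_AE)
    have "AE \<omega> in M1. T (Suc k - 1) \<omega> \<le> s \<longrightarrow>
        real_cond_exp M1 (past_algebra M1 T (Suc k)) (indicator {\<omega> \<in> space M1. T (Suc k) \<omega> > s}) \<omega>
          = survival F s / survival F (T (Suc k - 1) \<omega>)"
    proof -
      have "\<forall>i\<ge>2. \<forall>t. AE \<omega> in M1. T (i - 1) \<omega> \<le> t \<longrightarrow>
        real_cond_exp M1 (past_algebra M1 T i) (indicator {\<omega> \<in> space M1. T i \<omega> > t}) \<omega>
          = survival F t / survival F (T (i - 1) \<omega>)"
        using MR unfolding minimal_repair_def by blast
      moreover have "Suc k \<ge> 2" using k by simp
      ultimately have "AE \<omega> in M1. T (Suc k - 1) \<omega> \<le> s \<longrightarrow>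
        real_cond_exp M1 (past_algebra M1 T (Suc k)) (indicator {\<omega> \<in> space M1. T (Suc k) \<omega> > s}) \<omega>
          = survival F s / survival F (T (Suc k - 1) \<omega>)" by blast
      then show ?thesis by simp

    qed
    then show "AE \<omega> in M1. indicator ?A \<omega> *\<^sub>R real_cond_exp M1 ?G ?f \<omega> = indicator ?A \<omega> * (survival F s / survival F (T k \<omega>))"
      by eventually_elim (auto simp: indicator_def Bs)
    show "(\<lambda>\<omega>. indicator ?A \<omega> *\<^sub>R real_cond_exp M1 ?G ?f \<omega>) \<in> borel_measurable M1"
    proof -
      have "real_cond_exp M1 ?G ?f \<in> borel_measurable M1"
        by (rule borel_measurable_cond_exp2)
      moreover have "?A \<in> sets M1" using B by measurable
      ultimately show ?thesis by measurable
    qed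
    show "(\<lambda>\<omega>. indicator ?A \<omega> * (survival F s / survival F (T k \<omega>))) \<in> borel_measurable M1"
      using B by measurable
  qed
  finally have eq: "(\<integral>x \<in> ?A. ?f x \<partial>M1) = (\<integral>\<omega>. indicator ?A \<omega> * (survival F s / survival F (T k \<omega>)) \<partial>M1)" .
  have "(\<integral>x \<in> ?A. ?f x \<partial>M1) = measure M1 (?A \<inter> {\<omega>\<in>space M1. T (Suc k) \<omega> > s})"
    unfolding set_lebesgue_integral_def
    using B by (simp add: indicator_inter_arith[symmetric])
  moreover have "?A \<inter> {\<omega>\<in>space M1. T (Suc k) \<omega> > s} = {\<omega>\<in>space M1. T k \<omega> \<in> B \<and> T (Suc k) \<omega> > s}"
    by auto
  ultimately show ?thesis using eq by simp
qed

end


context mr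
begin

interpretation M1: prob_space M1 by (rule P1)

lemma int_ok:
  assumes k: "1 \<le> k" and B: "B \<in> sets borel" and Bs: "\<And>x. x \<in> B \<Longrightarrow> x \<le> s"
  shows "integrable M1 (\<lambda>\<omega>. indicator {\<omega>\<in>space M1. T k \<omega> \<in> B} \<omega> * (survival F s / survival F (T k \<omega>)))"
proof (rule Bochner_Integration.integrable_bound)
  have [measurable]: "T k \<in> borel_measurable M1" using k by simp
  show "integrable M1 (indicator {\<omega>\<in>space M1. T k \<omega> \<in> B} :: 'b \<Rightarrow> real)"
    using B by (intro integrable_real_indicator) (auto simp: M1.emeasure_eq_measure)
  show "(\<lambda>\<omega>. indicator {\<omega>\<in>space M1. T k \<omega> \<in> B} \<omega> * (survival F s / survival F (T k \<omega>))) \<in> borel_measurable M1"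
    using B by measurable
  show "AE \<omega> in M1. norm (indicator {\<omega>\<in>space M1. T k \<omega> \<in> B} \<omega> * (survival F s / survival F (T k \<omega>)))
      \<le> norm (indicator {\<omega>\<in>space M1. T k \<omega> \<in> B} \<omega> :: real)"
  proof (rule AE_I2)
    fix \<omega> assume "\<omega> \<in> space M1"
    show "norm (indicator {\<omega>\<in>space M1. T k \<omega> \<in> B} \<omega> * (survival F s / survival F (T k \<omega>)))
      \<le> norm (indicator {\<omega>\<in>space M1. T k \<omega> \<in> B} \<omega> :: real)"
    proof (cases "T k \<omega> \<in> B")
      case True
      then have "survival F s \<le> survival F (T k \<omega>)" using Bs surv_anti by blast
      then show ?thesis using True surv_pos[of s] surv_pos[of "T k \<omega>"] by (auto simp: indicator_def)
    qed (simp add: indicator_def)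
  qed
qed

lemma key2:
  assumes k: "1 \<le> k" and B: "B \<in> sets borel" and Bs: "\<And>x. x \<in> B \<Longrightarrow> x \<le> s"
  shows "measure M1 {\<omega>\<in>space M1. T k \<omega> \<in> B \<and> T (Suc k) \<omega> \<le> s}
       = measure M1 {\<omega>\<in>space M1. T k \<omega> \<in> B} - (\<integral>\<omega>. indicator {\<omega>\<in>space M1. T k \<omega> \<in> B} \<omega> * (survival F s / survival F (T k \<omega>)) \<partial>M1)"
proof -
  have [measurable]: "T k \<in> borel_measurable M1" "T (Suc k) \<in> borel_measurable M1" using k by auto
  have "{\<omega>\<in>space M1. T k \<omega> \<in> B} = {\<omega>\<in>space M1. T k \<omega> \<in> B \<and> T (Suc k) \<omega> \<le> s} \<union> {\<omega>\<in>space M1. T k \<omega> \<in> B \<and> T (Suc k) \<omega> > s}"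
    by auto
  then have "measure M1 {\<omega>\<in>space M1. T k \<omega> \<in> B} = measure M1 {\<omega>\<in>space M1. T k \<omega> \<in> B \<and> T (Suc k) \<omega> \<le> s} + measure M1 {\<omega>\<in>space M1. T k \<omega> \<in> B \<and> T (Suc k) \<omega> > s}"
    using B by (simp add: M1.finite_measure_Union[symmetric] disjoint_iff)
  then show ?thesis using key[OF k B Bs] by simp
qed

lemma ratio_bound:
  assumes k: "1 \<le> k" and B: "B \<in> sets borel" and Bs: "\<And>x. x \<in> B \<Longrightarrow> x \<le> s"
    and r: "\<And>x. x \<in> B \<Longrightarrow> r \<le> survival F s / survival F x"
  shows "r * measure M1 {\<omega>\<in>space M1. T k \<omega> \<in> B} \<le> (\<integral>\<omega>. indicator {\<omega>\<in>space M1. T k \<omega> \<in> B} \<omega> * (survival F s / survival F (T k \<omega>)) \<partial>M1)"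
proof -
  have [measurable]: "T k \<in> borel_measurable M1" using k by auto
  have "r * measure M1 {\<omega>\<in>space M1. T k \<omega> \<in> B} = (\<integral>\<omega>. indicator {\<omega>\<in>space M1. T k \<omega> \<in> B} \<omega> * r \<partial>M1)"
    using B by simp
  also have "\<dots> \<le> (\<integral>\<omega>. indicator {\<omega>\<in>space M1. T k \<omega> \<in> B} \<omega> * (survival F s / survival F (T k \<omega>)) \<partial>M1)"
  proof (rule integral_mono)
    show "integrable M1 (\<lambda>\<omega>. indicator {\<omega>\<in>space M1. T k \<omega> \<in> B} \<omega> * r)"
      using B by (intro integrable_mult_left integrable_real_indicator) (auto simp: M1.emeasure_eq_measure)
    show "integrable M1 (\<lambda>\<omega>. indicator {\<omega>\<in>space M1. T k \<omega> \<in> B} \<omega> * (survival F s / survival F (T k \<omega>)))"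
      by (rule int_ok[OF k B Bs])
    fix \<omega> show "indicator {\<omega>\<in>space M1. T k \<omega> \<in> B} \<omega> * r \<le> indicator {\<omega>\<in>space M1. T k \<omega> \<in> B} \<omega> * (survival F s / survival F (T k \<omega>))"
      using r by (auto simp: indicator_def)
  qed
  finally show ?thesis .
qed

end


context mr
begin

interpretation M1: prob_space M1 by (rule P1)

lemma grid_bound:
  assumes k: "1 \<le> k" and ab: "a < b" and eps: "\<epsilon> > 0"
  shows "measure M1 {\<omega>\<in>space M1. T (Suc k) \<omega> < T k \<omega> \<and> a \<le> T k \<omega> \<and> T k \<omega> < b} \<le> \<epsilon>"
proof -
  have [measurable]: "T k \<in> borel_measurable M1" "T (Suc k) \<in> borel_measurable M1" using k by auto
  define \<beta> where "\<beta> = survival F b"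
  have \<beta>: "\<beta> > 0" using surv_pos by (simp add: \<beta>_def)
  have uc: "uniformly_continuous_on {a..b} F"
    by (rule compact_uniformly_continuous[OF continuous_on_subset[OF cont]]) auto
  obtain \<delta> where \<delta>: "\<delta> > 0" and d: "\<And>x x'. x \<in> {a..b} \<Longrightarrow> x' \<in> {a..b} \<Longrightarrow> dist x' x < \<delta> \<Longrightarrow> dist (F x') (F x) < \<epsilon> * \<beta>"
    using uc[unfolded uniformly_continuous_on_def, rule_format, of "\<epsilon> * \<beta>"] eps \<beta> by auto
  obtain n :: nat where n: "(b - a) / \<delta> < real n" using reals_Archimedean2 by blast
  define m where "m = Suc n"
  have m0: "real m > 0" by (simp add: m_def)
  have "(b - a) / \<delta> < real m" using n by (simp add: m_def)
  then have hd: "(b - a) / real m < \<delta>" using \<delta> m0 by (simp add: field_simps)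
  define h where "h = (b - a) / real m"
  have h0: "h > 0" using ab m0 by (simp add: h_def)
  define g where "g i = a + real i * h" for i :: nat
  have gm: "g m = b" using m0 by (simp add: g_def h_def)
  have gmono: "i \<le> j \<Longrightarrow> g i \<le> g j" for i j using h0 by (simp add: g_def mult_right_mono)
  have gSuc: "g (Suc i) = g i + h" for i by (simp add: g_def algebra_simps)
  define I where "I i = {\<omega>\<in>space M1. T k \<omega> \<in> {g i..<g (Suc i)}}" for i
  define E where "E i = {\<omega>\<in>space M1. T k \<omega> \<in> {g i..<g (Suc i)} \<and> T (Suc k) \<omega> \<le> g (Suc i)}" for i
  have Im[measurable]: "I i \<in> sets M1" for i unfolding I_def by measurable
  have Em[measurable]: "E i \<in> sets M1" for i unfolding E_def by measurable
  have EI: "measure M1 (E i) \<le> \<epsilon> * measure M1 (I i)" if i: "i < m" for i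
  proof -
    have B: "{g i..<g (Suc i)} \<in> sets borel" by simp
    have Bs: "\<And>x. x \<in> {g i..<g (Suc i)} \<Longrightarrow> x \<le> g (Suc i)" by simp
    have r: "1 - \<epsilon> \<le> survival F (g (Suc i)) / survival F x" if x: "x \<in> {g i..<g (Suc i)}" for x
    proof -
      have ga: "g i \<ge> a" using gmono[of 0 i] by (simp add: g_def)
      have gb: "g (Suc i) \<le> b" using gmono[of "Suc i" m] i gm by simp
      have xab: "x \<in> {a..b}" "g (Suc i) \<in> {a..b}" using x ga gb gmono[of 0 "Suc i"] by (auto simp: g_def)
      have "dist (g (Suc i)) x < \<delta>" using x gSuc[of i] hd by (simp add: dist_real_def h_def)
      then have "dist (F (g (Suc i))) (F x) < \<epsilon> * \<beta>" using d xab by blast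
      then have "F (g (Suc i)) - F x < \<epsilon> * \<beta>" by (simp add: dist_real_def)
      moreover have "\<beta> \<le> survival F x" unfolding \<beta>_def using xab by (intro surv_anti) auto
      ultimately have "survival F x - survival F (g (Suc i)) \<le> \<epsilon> * survival F x"
        using eps by (simp add: survival_def) (smt (verit) mult_left_mono)
      then have "(1 - \<epsilon>) * survival F x \<le> survival F (g (Suc i))" by (simp add: algebra_simps)
      then show ?thesis using surv_pos[of x] by (simp add: le_divide_eq)
    qed
    have "measure M1 (E i) = measure M1 (I i) - (\<integral>\<omega>. indicator (I i) \<omega> * (survival F (g (Suc i)) / survival F (T k \<omega>)) \<partial>M1)"
      unfolding E_def I_def by (rule key2[OF k B Bs])
    also have "\<dots> \<le> measure M1 (I i) - (1 - \<epsilon>) * measure M1 (I i)"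
      using ratio_bound[OF k B Bs r] unfolding I_def by simp
    finally show ?thesis by (simp add: algebra_simps)
  qed
  have cover: "{\<omega>\<in>space M1. T (Suc k) \<omega> < T k \<omega> \<and> a \<le> T k \<omega> \<and> T k \<omega> < b} \<subseteq> (\<Union>i\<in>{..<m}. E i)"
  proof
    fix \<omega> assume \<omega>: "\<omega> \<in> {\<omega>\<in>space M1. T (Suc k) \<omega> < T k \<omega> \<and> a \<le> T k \<omega> \<and> T k \<omega> < b}"
    define x where "x = T k \<omega>"
    define q where "q = (x - a) / h"
    have q0: "q \<ge> 0" using \<omega> h0 by (simp add: q_def x_def)
    have qm: "q < real m" using \<omega> h0 m0 by (simp add: q_def x_def h_def field_simps)
    define i where "i = nat \<lfloor>q\<rfloor>"
    have iq: "real i \<le> q" "q < real i + 1" using q0 by (simp_all add: i_def)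
    have im: "i < m" using iq qm by linarith
    have "g i \<le> x" using iq h0 by (simp add: g_def q_def field_simps)
    moreover have "x < g (Suc i)" using iq h0 by (simp add: g_def q_def field_simps)
    ultimately have "\<omega> \<in> E i" using \<omega> by (auto simp: E_def x_def)
    then show "\<omega> \<in> (\<Union>i\<in>{..<m}. E i)" using im by auto
  qed
  have disj: "disjoint_family_on I {..<m}"
    unfolding disjoint_family_on_def
  proof (intro ballI impI)
    fix i j assume "i \<in> {..<m}" "j \<in> {..<m}" "i \<noteq> j"
    then have "Suc i \<le> j \<or> Suc j \<le> i" by auto
    then show "I i \<inter> I j = {}"
      using gmono[of "Suc i" j] gmono[of "Suc j" i] by (auto simp: I_def)
  qed
  have "measure M1 {\<omega>\<in>space M1. T (Suc k) \<omega> < T k \<omega> \<and> a \<le> T k \<omega> \<and> T k \<omega> < b} \<le> measure M1 (\<Union>i\<in>{..<m}. E i)"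
    using cover by (intro M1.finite_measure_mono) auto
  also have "\<dots> \<le> (\<Sum>i<m. measure M1 (E i))"
    by (rule M1.finite_measure_subadditive_finite) auto
  also have "\<dots> \<le> (\<Sum>i<m. \<epsilon> * measure M1 (I i))"
    by (intro sum_mono EI) auto
  also have "\<dots> = \<epsilon> * measure M1 (\<Union>i\<in>{..<m}. I i)"
    using disj by (subst measure_finite_Union) (auto simp: sum_distrib_left M1.emeasure_eq_measure)
  also have "\<dots> \<le> \<epsilon> * 1"
    using eps by (intro mult_left_mono) auto
  finally show ?thesis by simp
qed

end


context mr
begin

interpretation M1: prob_space M1 by (rule P1)

lemma mono_null:
  assumes k: "1 \<le> k"
  shows "emeasure M1 {\<omega>\<in>space M1. T (Suc k) \<omega> < T k \<omega>} = 0"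
proof -
  have [measurable]: "T k \<in> borel_measurable M1" "T (Suc k) \<in> borel_measurable M1" using k by auto
  define D where "D N = {\<omega>\<in>space M1. T (Suc k) \<omega> < T k \<omega> \<and> - real (Suc N) \<le> T k \<omega> \<and> T k \<omega> < real (Suc N)}" for N
  have Dm: "D N \<in> sets M1" for N unfolding D_def by measurable
  have D0: "emeasure M1 (D N) = 0" for N
  proof -
    have "measure M1 (D N) \<le> 0"
    proof (rule field_le_epsilon)
      fix e :: real assume "e > 0"
      then show "measure M1 (D N) \<le> 0 + e"
        unfolding D_def using grid_bound[OF k, of "- real (Suc N)" "real (Suc N)" e] by simp
    qed
    then have "measure M1 (D N) = 0" using measure_nonneg[of M1 "D N"] by linarith
    then show ?thesis by (simp add: M1.emeasure_eq_measure)
  qed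
  have "{\<omega>\<in>space M1. T (Suc k) \<omega> < T k \<omega>} = (\<Union>N. D N)"
  proof (intro set_eqI iffI)
    fix \<omega> assume \<omega>: "\<omega> \<in> {\<omega>\<in>space M1. T (Suc k) \<omega> < T k \<omega>}"
    obtain N :: nat where "\<bar>T k \<omega>\<bar> < real N" using reals_Archimedean2 by blast
    then have "\<omega> \<in> D N" using \<omega> by (auto simp: D_def)
    then show "\<omega> \<in> (\<Union>N. D N)" by blast
  qed (auto simp: D_def)
  also have "emeasure M1 \<dots> = 0"
    using D0 Dm by (intro emeasure_UN_eq_0) auto
  finally show ?thesis .
qed

lemma lawT1: "distr M1 borel (T 1) = nu"
proof (rule cdf_unique)
  show "real_distribution (distr M1 borel (T 1))"
    by (simp add: real_distribution_def real_distribution_axioms_def M1.prob_space_distr)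
  show "real_distribution nu"
    using nu_prob by (simp add: real_distribution_def real_distribution_axioms_def)
  show "cdf (distr M1 borel (T 1)) = cdf nu"
  proof
    fix x
    have "measure (distr M1 borel (T 1)) {..x} = measure M1 {\<omega>\<in>space M1. T 1 \<omega> \<le> x}"
      by (subst measure_distr) (auto simp: vimage_def Int_def conj_commute)
    also have "\<dots> = F x" by (rule T1_le)
    finally show "cdf (distr M1 borel (T 1)) x = cdf nu x"
      by (simp add: cdf_def F_nu)
  qed
qed

lemma T_AE: "AE \<omega> in M1. \<forall>k. 1 \<le> k \<longrightarrow> 0 \<le> T k \<omega> \<and> T k \<omega> \<le> T (Suc k) \<omega>"
proof -
  have m: "AE \<omega> in M1. \<forall>k. 1 \<le> k \<longrightarrow> T k \<omega> \<le> T (Suc k) \<omega>"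
  proof (subst AE_all_countable, intro allI)
    fix k :: nat
    show "AE \<omega> in M1. 1 \<le> k \<longrightarrow> T k \<omega> \<le> T (Suc k) \<omega>"
    proof (cases "1 \<le> k")
      case True
      have [measurable]: "T k \<in> borel_measurable M1" "T (Suc k) \<in> borel_measurable M1" using True by auto
      show ?thesis
        using mono_null[OF True] True
        by (subst AE_iff_measurable[where N="{\<omega>\<in>space M1. T (Suc k) \<omega> < T k \<omega>}"]) auto
    qed simp
  qed
  have z: "AE \<omega> in M1. 0 \<le> T 1 \<omega>"
  proof -
    have "emeasure M1 {\<omega>\<in>space M1. T 1 \<omega> < 0} = emeasure (distr M1 borel (T 1)) {..<0}"
      by (subst emeasure_distr) (auto simp: vimage_def Int_def conj_commute)
    also have "\<dots> = 0" using lawT1 nu_neg by simp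
    finally show ?thesis
      by (subst AE_iff_measurable[where N="{\<omega>\<in>space M1. T 1 \<omega> < 0}"]) auto
  qed
  show ?thesis
    using m z
  proof eventually_elim
    case (elim \<omega>)
    have "0 \<le> T k \<omega>" if "1 \<le> k" for k
      using that
    proof (induction k rule: dec_induct)
      case base then show ?case using elim by simp
    next
      case (step n) then show ?case using elim by (meson order_trans)
    qed
    then show ?case using elim by auto
  qed
qed

lemma T_chain:
  assumes H: "\<forall>k. 1 \<le> k \<longrightarrow> 0 \<le> T k \<omega> \<and> T k \<omega> \<le> T (Suc k) \<omega>" and j: "1 \<le> j" and jn: "j \<le> n"
  shows "T j \<omega> \<le> T n \<omega>"
  using jn
proof (induction rule: dec_induct)
  case base then show ?case by simp
next
  case (step n) then show ?case using H j by (meson order_trans le_trans)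
qed

lemma upper: "1 \<le> k \<Longrightarrow> measure M1 {\<omega>\<in>space M1. T k \<omega> \<le> t} \<le> F t ^ k"
proof (induction k rule: nat_induct_at_least)
  case base then show ?case using T1_le[of t] by simp
next
  case (Suc k)
  have k: "1 \<le> k" by fact
  have [measurable]: "T k \<in> borel_measurable M1" "T (Suc k) \<in> borel_measurable M1" using k by auto
  have "measure M1 {\<omega>\<in>space M1. T (Suc k) \<omega> \<le> t} \<le> measure M1 {\<omega>\<in>space M1. T k \<omega> \<in> {..t} \<and> T (Suc k) \<omega> \<le> t}"
  proof (rule M1.finite_measure_mono_AE)
    show "AE \<omega> in M1. \<omega> \<in> {\<omega>\<in>space M1. T (Suc k) \<omega> \<le> t} \<longrightarrow> \<omega> \<in> {\<omega>\<in>space M1. T k \<omega> \<in> {..t} \<and> T (Suc k) \<omega> \<le> t}"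
      using T_AE by eventually_elim (use k in auto)
  qed measurable
  also have "\<dots> = measure M1 {\<omega>\<in>space M1. T k \<omega> \<in> {..t}} - (\<integral>\<omega>. indicator {\<omega>\<in>space M1. T k \<omega> \<in> {..t}} \<omega> * (survival F t / survival F (T k \<omega>)) \<partial>M1)"
    by (rule key2[OF k]) auto
  also have "\<dots> \<le> measure M1 {\<omega>\<in>space M1. T k \<omega> \<in> {..t}} - survival F t * measure M1 {\<omega>\<in>space M1. T k \<omega> \<in> {..t}}"
  proof -
    have "survival F t * measure M1 {\<omega>\<in>space M1. T k \<omega> \<in> {..t}} \<le> (\<integral>\<omega>. indicator {\<omega>\<in>space M1. T k \<omega> \<in> {..t}} \<omega> * (survival F t / survival F (T k \<omega>)) \<partial>M1)"
    proof (rule ratio_bound[OF k])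
      fix x :: real
      have "survival F t * survival F x \<le> survival F t"
        using surv_le1[of x] surv_pos[of t] by (simp add: mult_left_le)
      then show "survival F t \<le> survival F t / survival F x"
        using surv_pos[of x] by (simp add: le_divide_eq)
    qed auto
    then show ?thesis by simp
  qed
  also have "\<dots> = F t * measure M1 {\<omega>\<in>space M1. T k \<omega> \<le> t}"
    by (simp add: survival_def algebra_simps)
  also have "\<dots> \<le> F t * F t ^ k"
    using Suc.IH F_ge0[of t] by (intro mult_left_mono) auto
  finally show ?case by simp
qed

lemma finite_AE: "AE \<omega> in M1. finite {n. 1 \<le> n \<and> T n \<omega> \<le> t}"
proof -
  have [measurable]: "\<And>m. T (Suc m) \<in> borel_measurable M1" by simp
  define C where "C = (\<Inter>m. {\<omega>\<in>space M1. T (Suc m) \<omega> \<le> t})"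
  have Cm: "C \<in> sets M1" unfolding C_def by measurable
  have Ft: "F t < 1"
  proof (cases "t \<ge> 0")
    case True then show ?thesis using pos by (auto simp: survival_def)
  next
    case False then show ?thesis using F_neg[of t] by simp
  qed
  have "measure M1 C \<le> 0"
  proof (rule LIMSEQ_le_const)
    show "(\<lambda>m. F t ^ Suc m) \<longlonglongrightarrow> 0"
      using Ft F_ge0[of t] by (intro LIMSEQ_Suc LIMSEQ_power_zero) auto
    show "\<exists>N. \<forall>n\<ge>N. measure M1 C \<le> F t ^ Suc n"
    proof (intro exI allI impI)
      fix n :: nat
      have "measure M1 C \<le> measure M1 {\<omega>\<in>space M1. T (Suc n) \<omega> \<le> t}"
        unfolding C_def by (intro M1.finite_measure_mono) auto
      also have "\<dots> \<le> F t ^ Suc n" by (rule upper) simp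
      finally show "measure M1 C \<le> F t ^ Suc n" .
    qed
  qed
  then have "emeasure M1 C = 0" using measure_nonneg[of M1 C] by (simp add: M1.emeasure_eq_measure)
  then have nC: "AE \<omega> in M1. \<omega> \<notin> C"
    using Cm by (subst AE_iff_measurable[where N=C]) (auto simp: C_def)
  show ?thesis
    using nC T_AE AE_space
  proof eventually_elim
    case (elim \<omega>)
    show ?case
    proof -
      obtain m where m: "T (Suc m) \<omega> > t" using elim(1) elim(3) by (auto simp: C_def not_le)
      have "{n. 1 \<le> n \<and> T n \<omega> \<le> t} \<subseteq> {..m}"
      proof
        fix n assume n: "n \<in> {n. 1 \<le> n \<and> T n \<omega> \<le> t}"
        show "n \<in> {..m}"
        proof (rule ccontr)
          assume "n \<notin> {..m}"
          then have "Suc m \<le> n" by auto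
          then have "T (Suc m) \<omega> \<le> T n \<omega>" using T_chain[OF elim(2)] by simp
          then show False using n m by simp
        qed
      qed
      then show ?thesis using finite_subset by blast
    qed
  qed
qed

end


context base
begin
lemma F_enn: "ennreal (F s) = (\<integral>\<^sup>+ x. indicator {..s} x \<partial>nu)"
proof -
  interpret N: prob_space nu by (rule nu_prob)
  show ?thesis by (simp add: F_nu N.emeasure_eq_measure)
qed
end

context mr
begin

interpretation M1: prob_space M1 by (rule P1)

lemma lower: "1 \<le> k \<Longrightarrow> cc nu k t \<le> emeasure M1 {\<omega>\<in>space M1. T k \<omega> \<le> t}"
proof (induction k arbitrary: t rule: nat_induct_at_least)
  case base
  show ?case using T1_le[of t] cc1[of t] by (simp add: M1.emeasure_eq_measure)
next
  case (Suc k)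
  have k: "1 \<le> k" by fact
  have [measurable]: "T k \<in> borel_measurable M1" "T (Suc k) \<in> borel_measurable M1" using k by auto
  define A where "A = {\<omega>\<in>space M1. T k \<omega> \<in> {..t}}"
  define R where "R = (\<lambda>\<omega>. indicator A \<omega> * (survival F t / survival F (T k \<omega>)))"
  have Am[measurable]: "A \<in> sets M1" unfolding A_def by measurable
  have Ri: "integrable M1 R" unfolding R_def A_def by (rule int_ok[OF k]) auto
  have Ai: "integrable M1 (indicator A :: 'b \<Rightarrow> real)"
    by (intro integrable_real_indicator) (auto simp: M1.emeasure_eq_measure)
  define L where "L = distr M1 borel (T k)"
  interpret L: prob_space L unfolding L_def by (rule M1.prob_space_distr) simp
  interpret N: prob_space nu by (rule nu_prob)
  interpret LN: pair_sigma_finite L nu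
    by (simp add: L.sigma_finite_measure_axioms N.sigma_finite_measure_axioms pair_sigma_finite.intro)
  have sL[measurable_cong]: "sets L = sets borel" by (simp add: L_def)
  have "cc nu (Suc k) t = (\<integral>\<^sup>+ x. cc nu k (t - x) \<partial>nu)" by simp
  also have "\<dots> \<le> (\<integral>\<^sup>+ x. emeasure M1 {\<omega>\<in>space M1. T k \<omega> \<le> t - x} \<partial>nu)"
    by (intro nn_integral_mono Suc.IH)
  also have "\<dots> = (\<integral>\<^sup>+ x. (\<integral>\<^sup>+ z. indicator {..t} (z + x) \<partial>L) \<partial>nu)"
  proof (rule nn_integral_cong)
    fix x
    have "(\<integral>\<^sup>+ z. indicator {..t} (z + x) \<partial>L) = (\<integral>\<^sup>+ z. indicator {..t - x} z \<partial>L)"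
      by (intro nn_integral_cong) (auto simp: indicator_def)
    also have "\<dots> = emeasure L {..t - x}" by simp
    also have "\<dots> = emeasure M1 {\<omega>\<in>space M1. T k \<omega> \<le> t - x}"
      unfolding L_def by (subst emeasure_distr) (auto simp: vimage_def Int_def conj_commute)
    finally show "emeasure M1 {\<omega>\<in>space M1. T k \<omega> \<le> t - x} = (\<integral>\<^sup>+ z. indicator {..t} (z + x) \<partial>L)" by simp
  qed
  also have "\<dots> = (\<integral>\<^sup>+ z. (\<integral>\<^sup>+ x. indicator {..t} (z + x) \<partial>nu) \<partial>L)"
    by (rule LN.Fubini') measurable
  also have "\<dots> = (\<integral>\<^sup>+ z. ennreal (F (t - z)) \<partial>L)"
  proof (rule nn_integral_cong)
    fix z
    show "(\<integral>\<^sup>+ x. indicator {..t} (z + x) \<partial>nu) = ennreal (F (t - z))"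
      unfolding F_enn by (intro nn_integral_cong) (auto simp: indicator_def)
  qed
  also have "\<dots> = (\<integral>\<^sup>+ \<omega>. ennreal (F (t - T k \<omega>)) \<partial>M1)"
    unfolding L_def by (subst nn_integral_distr) auto
  also have "\<dots> = ennreal (\<integral>\<omega>. F (t - T k \<omega>) \<partial>M1)"
  proof (rule nn_integral_eq_integral)
    show "integrable M1 (\<lambda>\<omega>. F (t - T k \<omega>))"
      by (rule M1.integrable_const_bound[where B=1]) (auto simp: F_le1 F_ge0)
  qed (simp add: F_ge0)
  also have "\<dots> \<le> ennreal (\<integral>\<omega>. indicator A \<omega> - R \<omega> \<partial>M1)"
  proof (rule ennreal_leI, rule integral_mono_AE')
    show "integrable M1 (\<lambda>\<omega>. indicator A \<omega> - R \<omega>)" using Ai Ri by simp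
    show "AE \<omega> in M1. F (t - T k \<omega>) \<le> indicator A \<omega> - R \<omega>"
      using T_AE AE_space
    proof eventually_elim
      case (elim \<omega>)
      then have nn: "0 \<le> T k \<omega>" using k by auto
      show ?case
      proof (cases "T k \<omega> \<le> t")
        case True
        have "survival F t \<le> survival F (T k \<omega>) * survival F (t - T k \<omega>)"
          using nbu_mult[of "T k \<omega>" "t - T k \<omega>"] nn True by simp
        then have "survival F t / survival F (T k \<omega>) \<le> survival F (t - T k \<omega>)"
          using surv_pos[of "T k \<omega>"] by (simp add: divide_le_eq mult.commute)
        then show ?thesis using True elim(2) by (auto simp: R_def A_def indicator_def survival_def)
      next
        case False
        then show ?thesis using F_neg[of "t - T k \<omega>"] by (auto simp: R_def A_def indicator_def)
      qed
    qed
    show "AE \<omega> in M1. 0 \<le> indicator A \<omega> - R \<omega>"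
    proof (rule AE_I2)
      fix \<omega> assume "\<omega> \<in> space M1"
      show "0 \<le> indicator A \<omega> - R \<omega>"
      proof (cases "\<omega> \<in> A")
        case True
        then have "survival F t \<le> survival F (T k \<omega>)" using surv_anti by (auto simp: A_def)
        then show ?thesis using True surv_pos[of "T k \<omega>"] by (auto simp: R_def indicator_def)
      qed (simp add: R_def indicator_def)
    qed
  qed
  also have "\<dots> = ennreal (measure M1 A - integral\<^sup>L M1 R)"
    using Ai Ri by (simp add: Bochner_Integration.integral_diff)
  also have "\<dots> = ennreal (measure M1 {\<omega>\<in>space M1. T k \<omega> \<in> {..t} \<and> T (Suc k) \<omega> \<le> t})"
    unfolding A_def R_def by (subst key2[OF k]) auto
  also have "\<dots> \<le> ennreal (measure M1 {\<omega>\<in>space M1. T (Suc k) \<omega> \<le> t})"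
    by (intro ennreal_leI M1.finite_measure_mono) auto
  also have "\<dots> = emeasure M1 {\<omega>\<in>space M1. T (Suc k) \<omega> \<le> t}"
    by (simp add: M1.emeasure_eq_measure)
  finally show ?case .
qed

end


context ar
begin

interpretation M2: prob_space M2 by (rule P2)

lemma AR_final:
  assumes k: "1 \<le> k"
  shows "emeasure M2 {\<omega>\<in>space M2. k \<le> N_AR K Y t \<omega>} \<le> cc nu k t"
proof -
  define A where "A m = {\<omega>\<in>space M2. ARA K m k (\<lambda>j. Y j \<omega>) t}" for m
  have Ym': "(\<lambda>\<omega>. ((\<lambda>j. Y j \<omega>), t)) \<in> measurable M2 (PiM UNIV (\<lambda>_::nat. borel) \<Otimes>\<^sub>M borel)"
    by (auto intro!: measurable_Pair measurable_PiM_single')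
  have Am: "A m \<in> sets M2" for m
  proof -
    have "Measurable.pred M2 (\<lambda>\<omega>. ARA K m k (\<lambda>j. Y j \<omega>) t)"
      using measurable_compose[OF Ym' ARA_meas] by simp
    then show ?thesis unfolding A_def by measurable
  qed
  have inc: "incseq A"
    by (rule incseq_SucI) (auto simp: A_def intro: ARA_mono)
  have Ab: "emeasure M2 (A m) \<le> cc nu k t" for m
    using AR_bound[of m k 0 t] k by (simp add: A_def)
  have "emeasure M2 {\<omega>\<in>space M2. k \<le> N_AR K Y t \<omega>} \<le> emeasure M2 (\<Union>m. A m)"
  proof (rule emeasure_mono_AE)
    show "(\<Union>m. A m) \<in> sets M2" using Am by auto
    show "AE \<omega> in M2. \<omega> \<in> {\<omega>\<in>space M2. k \<le> N_AR K Y t \<omega>} \<longrightarrow> \<omega> \<in> (\<Union>m. A m)"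
      using Y_nonneg
    proof eventually_elim
      case (elim \<omega>)
      show ?case
      proof
        assume \<omega>: "\<omega> \<in> {\<omega>\<in>space M2. k \<le> N_AR K Y t \<omega>}"
        define S where "S = ARset K (\<lambda>j. Y j \<omega>) t"
        have cS: "k \<le> card S" using \<omega> by (simp add: S_def ARset_def N_AR_def)
        have "0 < card S" using cS k by linarith
        then have fS: "finite S" and neS: "S \<noteq> {}" by (simp_all add: card_gt_0_iff)
        have "S \<subseteq> {..<Suc (Max S)}" using fS by (auto simp: less_Suc_eq_le)
        then have "ARA K (Suc (Max S)) k (\<lambda>j. Y j \<omega>) t"
          using ARset_ARA[of "\<lambda>j. Y j \<omega>"] elim cS by (simp add: S_def)
        then show "\<omega> \<in> (\<Union>m. A m)" using \<omega> by (auto simp: A_def)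
      qed
    qed
  qed
  also have "\<dots> = (SUP m. emeasure M2 (A m))"
    using Am inc by (subst SUP_emeasure_incseq) auto
  also have "\<dots> \<le> cc nu k t"
    using Ab by (rule SUP_least)
  finally show ?thesis .
qed

end



context mr
begin

interpretation M1: prob_space M1 by (rule P1)

lemma NMR_meas: "(\<lambda>\<omega>. N_MR T t \<omega>) \<in> M1 \<rightarrow>\<^sub>M count_space UNIV"
  unfolding N_MR_def
proof (rule measurable_Sup_nat)
  fix i :: nat
  show "Measurable.pred M1 (\<lambda>x. i \<in> insert 0 {n. 1 \<le> n \<and> T n x \<le> t})"
  proof (cases "i = 0")
    case True then show ?thesis by simp
  next
    case False
    then have [measurable]: "T i \<in> borel_measurable M1" by simp
    show ?thesis using False by simp
  qed
qed

lemma MR_final: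
  assumes k: "1 \<le> k"
  shows "cc nu k t \<le> emeasure M1 {\<omega>\<in>space M1. k \<le> N_MR T t \<omega>}"
proof -
  have "cc nu k t \<le> emeasure M1 {\<omega>\<in>space M1. T k \<omega> \<le> t}" by (rule lower[OF k])
  also have "\<dots> \<le> emeasure M1 {\<omega>\<in>space M1. k \<le> N_MR T t \<omega>}"
  proof (rule emeasure_mono_AE)
    have "(\<lambda>\<omega>. N_MR T t \<omega>) -` {k..} \<inter> space M1 \<in> sets M1"
      by (rule measurable_sets[OF NMR_meas]) simp
    then show "{\<omega>\<in>space M1. k \<le> N_MR T t \<omega>} \<in> sets M1"
      by (simp add: vimage_def Int_def conj_commute)
    show "AE \<omega> in M1. \<omega> \<in> {\<omega>\<in>space M1. T k \<omega> \<le> t} \<longrightarrow> \<omega> \<in> {\<omega>\<in>space M1. k \<le> N_MR T t \<omega>}"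
      using finite_AE[of t]
    proof eventually_elim
      case (elim \<omega>)
      show ?case
      proof
        assume \<omega>: "\<omega> \<in> {\<omega>\<in>space M1. T k \<omega> \<le> t}"
        have "k \<in> insert 0 {n. 1 \<le> n \<and> T n \<omega> \<le> t}" using \<omega> k by auto
        moreover have "finite (insert 0 {n. 1 \<le> n \<and> T n \<omega> \<le> t})" using elim by simp
        ultimately have "k \<le> Sup (insert 0 {n. 1 \<le> n \<and> T n \<omega> \<le> t})"
          by (rule le_cSup_finite[rotated])
        then show "\<omega> \<in> {\<omega>\<in>space M1. k \<le> N_MR T t \<omega>}" using \<omega> by (simp add: N_MR_def)
      qed
    qed
  qed
  finally show ?thesis .
qed

end



theorem mainTheorem6:
  fixes M :: "'a measure" and X :: "'a \<Rightarrow> real" and F :: "real \<Rightarrow> real"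
    and M1 :: "'b measure" and T :: "nat \<Rightarrow> 'b \<Rightarrow> real"
    and M2 :: "'c measure" and Y :: "nat \<Rightarrow> 'c \<Rightarrow> real" and K :: real
  assumes "prob_space M" and "has_cdf M X F"
    and "AE \<omega> in M. X \<omega> \<ge> 0"
    and "continuous_on UNIV F"
    and "NBU M X"
    and "\<forall>t\<ge>0. survival F t > 0"
    and "K > 0"
    and "prob_space M1" and "minimal_repair M1 F T"
    and "prob_space M2" and "iid_lifetimes M2 F Y"
  shows "\<forall>t\<ge>0. \<forall>s::real.
     measure M2 {\<omega> \<in> space M2. real (N_AR K Y t \<omega>) > s}
       \<le> measure M1 {\<omega> \<in> space M1. real (N_MR T t \<omega>) > s}"
proof (intro allI impI)
  fix t s :: real
  assume t: "t \<ge> 0"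
  have bs: "base M X F"
    using assms(1-6) by (rule base.intro)
  interpret A: ar M X F M2 Y K
    using bs assms(10,11,7) by (intro ar.intro ar_axioms.intro)
  interpret B: mr M X F M1 T
    using bs assms(8,9) by (intro mr.intro mr_axioms.intro)
  interpret M1: prob_space M1 by fact
  interpret M2: prob_space M2 by fact
  show "measure M2 {\<omega> \<in> space M2. real (N_AR K Y t \<omega>) > s}
       \<le> measure M1 {\<omega> \<in> space M1. real (N_MR T t \<omega>) > s}"
  proof (cases "s < 0")
    case True
    have "\<forall>n::nat. s < real n" using True by (metis less_le_trans of_nat_0_le_iff)
    then have "{\<omega> \<in> space M1. real (N_MR T t \<omega>) > s} = space M1"
      by auto
    then show ?thesis using M2.measure_le_1 by (simp add: M1.prob_space)
  next
    case False
    define k where "k = Suc (nat \<lfloor>s\<rfloor>)"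
    have k1: "1 \<le> k" by (simp add: k_def)
    have iff: "real n > s \<longleftrightarrow> k \<le> n" for n :: nat
      using False unfolding k_def by linarith
    have e1: "{\<omega> \<in> space M2. real (N_AR K Y t \<omega>) > s} = {\<omega>\<in>space M2. k \<le> N_AR K Y t \<omega>}"
      using iff by auto
    have e2: "{\<omega> \<in> space M1. real (N_MR T t \<omega>) > s} = {\<omega>\<in>space M1. k \<le> N_MR T t \<omega>}"
      using iff by auto
    have "emeasure M2 {\<omega>\<in>space M2. k \<le> N_AR K Y t \<omega>} \<le> emeasure M1 {\<omega>\<in>space M1. k \<le> N_MR T t \<omega>}"
      using A.AR_final[OF k1, of t] B.MR_final[OF k1, of t] by (rule order_trans)
    then have "enn2real (emeasure M2 {\<omega>\<in>space M2. k \<le> N_AR K Y t \<omega>}) \<le> enn2real (emeasure M1 {\<omega>\<in>space M1. k \<le> N_MR T t \<omega>})"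
      by (rule enn2real_mono) (simp add: M1.emeasure_finite less_top[symmetric])
    then show ?thesis unfolding e1 e2 measure_def .
  qed
qed


end
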